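(* Let $1<p<N$, $q>0$, $\mu>0$, $g(s)=\frac{(p-1)^{q-p+1}}{\mu^q}(1+\mu s)^{p-1}|\ln(1+\mu s)|^{q-1}\ln(1+\mu s)$ for $s>-1/\mu$, and $G(s)=\int_0^sg(t)\,dt$. Then $H(s):=g(s)s-pG(s)\to+\infty$ as $s\to+\infty$. *)

theory Defs
  imports "HOL-Analysis.Analysis"
begin

definition gfun :: "real \<Rightarrow> real \<Rightarrow> real \<Rightarrow> real \<Rightarrow> real" where
  "gfun p q \<mu> s = ((p - 1) powr (q - p + 1) / \<mu> powr q) * (1 + \<mu> * s) powr (p - 1)
     * \<bar>ln (1 + \<mu> * s)\<bar> powr (q - 1) * ln (1 + \<mu> * s)"

definition Gfun :: "real \<Rightarrow> real \<Rightarrow> real \<Rightarrow> real \<Rightarrow> real" where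
  "Gfun p q \<mu> s = (if 0 \<le> s then integral {0..s} (gfun p q \<mu>)
                    else - integral {s..0} (gfun p q \<mu>))"

definition Hfun :: "real \<Rightarrow> real \<Rightarrow> real \<Rightarrow> real \<Rightarrow> real" where
  "Hfun p q \<mu> s = gfun p q \<mu> s * s - p * Gfun p q \<mu> s"

end

theory Submission
  imports Defs "HOL-Real_Asymp.Real_Asymp"
begin

lemma g2_deriv:
  fixes C \<mu> s p q :: real
  assumes "\<mu> > 0" "s > 0"
  shows "((\<lambda>s. C * (1+\<mu> * s) powr (p-1) * ln(1+\<mu> * s) powr q) has_real_derivative
    C * ((p-1) * \<mu> * (1+\<mu> * s) powr (p-2) * ln(1+\<mu> * s) powr q
       + (1+\<mu> * s) powr (p-1) * q * ln(1+\<mu> * s) powr (q-1) * \<mu> / (1+\<mu> * s))) (at s)"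
proof -
  have x: "1+\<mu> * s > 1" using assms by simp
  hence L: "ln (1+\<mu> * s) > 0" by simp
  have x0: "0 < 1+\<mu> * s" using x by linarith
  show ?thesis
    using assms x0 L
    by (auto intro!: derivative_eq_intros simp: field_simps)
qed

theorem lemma3p1:
  fixes p q \<mu> :: real and N :: nat
  assumes "1 < p" "p < real N" "q > 0" "\<mu> > 0"
  shows "filterlim (Hfun p q \<mu>) at_top at_top"
proof -
  define C where "C = (p - 1) powr (q - p + 1) / \<mu> powr q"
  have Cpos: "C > 0" using assms unfolding C_def by auto
  define g2 where "g2 = (\<lambda>s. C * (1+\<mu> * s) powr (p-1) * ln(1+\<mu> * s) powr q)"
  define g2' where "g2' = (\<lambda>s. C * ((p-1) * \<mu> * (1+\<mu> * s) powr (p-2) * ln(1+\<mu> * s) powr q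
       + (1+\<mu> * s) powr (p-1) * q * ln(1+\<mu> * s) powr (q-1) * \<mu> / (1+\<mu> * s)))"
  have geq: "gfun p q \<mu> s = g2 s" if "s \<ge> 0" for s
  proof -
    have L: "ln (1+\<mu> * s) \<ge> 0" using that assms by simp
    have "\<bar>ln (1+\<mu> * s)\<bar> powr (q - 1) * ln (1+\<mu> * s) = ln (1+\<mu> * s) powr q"
    proof (cases "ln (1+\<mu> * s) = 0")
      case True thus ?thesis by simp
    next
      case False
      hence "ln (1+\<mu> * s) > 0" using L by linarith
      thus ?thesis using powr_mult_base[of "ln (1+\<mu> * s)" "q - 1"] by (simp add: mult.commute)
    qed
    thus ?thesis unfolding gfun_def g2_def C_def
      by (metis (no_types, lifting) mult.assoc)
  qed
  have pos: "1 + \<mu> * x > 0" if "x \<in> {0..}" for x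
    using that assms by (simp add: add_pos_nonneg)
  have pos2: "\<forall>x\<ge>0. 1 + \<mu> * x > 0" using pos by auto
  have cln: "continuous_on {0..} (\<lambda>x. ln (1 + \<mu> * x))"
    using pos by (intro continuous_intros) (force dest: pos)
  have c1: "continuous_on {0..} (\<lambda>x. (1 + \<mu> * x) powr (p - 1))"
    apply (rule continuous_on_powr')
    apply (auto intro!: continuous_intros)
    using pos2 assms by force+
  have c2: "continuous_on {0..} (\<lambda>x. ln (1 + \<mu> * x) powr q)"
    apply (rule continuous_on_powr'[OF cln])
    apply (auto intro!: continuous_intros)
    using pos2 assms by force+
  have cont: "continuous_on {0..} g2"
    unfolding g2_def
    by (intro continuous_on_mult continuous_on_const c1 c2)
  define I where "I = (\<lambda>s. integral {0..s} g2)"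
  have Ider: "(I has_real_derivative g2 s) (at s)" if "s > 0" for s
  proof -
    have c: "continuous_on {0..s+1} g2" using cont by (rule continuous_on_subset) auto
    have "(I has_real_derivative g2 s) (at s within {0..s+1})"
      unfolding I_def using integral_has_real_derivative[OF c, of s] that by simp
    moreover have "s \<in> interior {0..s+1}" using that by simp
    ultimately show ?thesis using at_within_interior by metis
  qed
  have Heq: "Hfun p q \<mu> s = g2 s * s - p * I s" if "s \<ge> 0" for s
  proof -
    have "Gfun p q \<mu> s = I s"
      unfolding Gfun_def I_def using that geq by (auto intro: integral_cong)
    thus ?thesis unfolding Hfun_def using geq[OF that] by simp
  qed
  define F where "F = (\<lambda>s. g2 s * s - p * I s - s)"
  have Fder: "(F has_real_derivative (g2' s * s + g2 s - p * g2 s - 1)) (at s)" if "s > 0" for s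
  proof -
    have d: "(g2 has_real_derivative g2' s) (at s)"
      unfolding g2_def g2'_def using g2_deriv[OF assms(4) that] by simp
    show ?thesis unfolding F_def
      by (rule derivative_eq_intros d Ider[OF that] | simp)+
  qed
  have ev1: "\<forall>\<^sub>F s in at_top. (p-1)*ln(1+\<mu> * s) \<le> q/2*\<mu> * s"
    using assms by real_asymp
  have lim2: "filterlim (\<lambda>s::real. (1+\<mu> * s) powr (p - 1) / ln(1+\<mu> * s)) at_top at_top"
    using assms by real_asymp
  have ev2: "\<forall>\<^sub>F s in at_top. (1+\<mu> * s) powr (p - 1) / ln(1+\<mu> * s) \<ge> 4 / (C*q)"
    using lim2 by (simp add: filterlim_at_top)
  have ev3: "\<forall>\<^sub>F s in at_top. \<mu> * s \<ge> 1 \<and> ln(1+\<mu> * s) \<ge> 1 \<and> s > 0"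
    using assms by (intro eventually_conj) real_asymp+
  have "\<forall>\<^sub>F s in at_top. g2' s * s + g2 s - p * g2 s - 1 \<ge> 0"
    using ev1 ev2 ev3
  proof eventually_elim
    case (elim s)
    define x where "x = 1 + \<mu> * s"
    define L where "L = ln x"
    define A where "A = x powr (p-2)"
    define B where "B = L powr (q-1)"
    have x1: "x \<ge> 2" "\<mu> * s \<ge> 1" using elim unfolding x_def by auto
    have L1: "L \<ge> 1" using elim unfolding L_def x_def by auto
    have Ax: "x powr (p-1) = A * x"
      unfolding A_def using powr_mult_base[of x "p-2"] x1 by (simp add: mult.commute)
    have BL: "L powr q = B * L"
      unfolding B_def using powr_mult_base[of L "q-1"] L1 by (simp add: mult.commute)
    have Apos: "A > 0" unfolding A_def using x1 by simp
    have Bpos: "B > 0" unfolding B_def using L1 by simp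
    have e1: "g2' s = C*((p-1)*\<mu>*A*(B*L) + (A* x)*q*B*\<mu>/x)"
      unfolding g2'_def using Ax BL unfolding A_def B_def L_def x_def by simp
    have e2: "g2 s = C*(A* x)*(B*L)"
      unfolding g2_def using Ax BL unfolding A_def B_def L_def x_def by simp
    have eq: "g2' s * s + g2 s - p * g2 s = C * A * B * (q*\<mu>* s - (p-1)*L)"
      unfolding e1 e2 using x1 unfolding x_def by (simp add: field_simps)
    have b1: "q*\<mu> * s - (p-1)*L \<ge> q* x/4"
    proof -
      have h1: "q * 1 \<le> q * (\<mu> * s)" using x1 assms by (intro mult_left_mono) auto
      have h2: "(p-1)*L \<le> q/2*\<mu>* s" using elim unfolding L_def x_def by simp
      have h3: "q * (1 + \<mu> * s) = q + q * (\<mu> * s)" by (simp add: algebra_simps)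
      have h4: "q * \<mu> * s = q * (\<mu> * s)" "q/2*\<mu>* s = (q * (\<mu> * s))/2" by simp_all
      have "\<And>Q M. q \<le> Q \<Longrightarrow> M \<le> Q/2 \<Longrightarrow> (q + Q)/4 \<le> Q - M" for q::real by (simp add: field_simps)
      from this[OF h1[simplified] h2[unfolded h4]]
      show ?thesis unfolding x_def h3 h4 .
    qed
    have b2: "B \<ge> 1 / L"
    proof -
      have "L powr (-1) \<le> L powr (q-1)" using L1 assms by (intro powr_mono) auto
      thus ?thesis unfolding B_def using L1 by (simp add: powr_minus divide_inverse)
    qed
    have "C * A * B * (q*\<mu> * s - (p-1)*L) \<ge> C * A * B * (q* x/4)"
      using b1 Cpos Apos Bpos by (intro mult_left_mono) auto
    also have "C * A * B * (q* x/4) = (C*q/4) * (A* x) * B" by (simp add: field_simps)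
    also have "\<dots> \<ge> (C*q/4) * (A* x) * (1/L)"
      using b2 Cpos Apos x1 assms by (intro mult_left_mono) auto
    also have "(C*q/4) * (A* x) * (1/L) = (C*q/4) * (x powr (p-1) / L)"
      using Ax by simp
    also have "\<dots> \<ge> (C*q/4) * (4/(C*q))"
      using elim Cpos assms unfolding x_def L_def by (intro mult_left_mono) auto
    also have "(C*q/4) * (4/(C*q)) = 1" using Cpos assms by simp
    finally show ?case using eq by linarith
  qed
  then obtain s0 where s0: "\<And>s. s \<ge> s0 \<Longrightarrow> g2' s * s + g2 s - p * g2 s - 1 \<ge> 0"
    by (auto simp: eventually_at_top_linorder)
  define s1 where "s1 = max s0 1"
  have mono: "F s1 \<le> F s" if "s \<ge> s1" for s
  proof (rule DERIV_nonneg_imp_nondecreasing[OF that])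
    fix x assume "s1 \<le> x" "x \<le> s"
    hence "x > 0" "x \<ge> s0" unfolding s1_def by auto
    thus "\<exists>y. (F has_real_derivative y) (at x) \<and> 0 \<le> y"
      using Fder s0 by blast
  qed
  show ?thesis
    unfolding filterlim_at_top
  proof
    fix Z
    show "\<forall>\<^sub>F s in at_top. Z \<le> Hfun p q \<mu> s"
      unfolding eventually_at_top_linorder
    proof (intro exI[of _ "max s1 (Z - F s1)"] allI impI)
      fix s assume "max s1 (Z - F s1) \<le> s"
      hence s: "s \<ge> s1" "s \<ge> Z - F s1" by auto
      have "s \<ge> 0" using s unfolding s1_def by auto
      hence "Hfun p q \<mu> s = F s + s" using Heq unfolding F_def by simp
      thus "Z \<le> Hfun p q \<mu> s" using mono[OF s(1)] s(2) by linarith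
    qed
  qed
qed

end
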